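(* Let $f:\mathbb{R}^n\to\mathbb{R}\cup\{+\infty\}$ be a polyhedral M-convex function with bounded $\operatorname{dom}_{\mathbb{R}} f$ and $x_0\in\operatorname{dom}_{\mathbb{R}} f$. Consider algorithm PM-LSD2: set $x:=x_0$; while $\phi_{\mathbb{R}}(x)<0$, replace $x$ by the output of PM-IncSlope$(x)$; when $\phi_{\mathbb{R}}(x)=0$ output $x$. Then PM-LSD2 terminates after finitely many calls of PM-IncSlope, and its output is a minimizer of $f$.
   Context: $N=\{1,\dots,n\}$; $\chi_i$ is the $i$-th unit vector. $\operatorname{dom}_{\mathbb{R}} f=\{x\in\mathbb{R}^n:f(x)<+\infty\}$. A polyhedral convex function $f:\mathbb{R}^n\to\mathbb{R}\cup\{+\infty\}$ (epigraph a polyhedron, $\operatorname{dom}_{\mathbb{R}} f\neq\emptyset$) is M-convex if for all $x,y\in\operatorname{dom}_{\mathbb{R}} f$ and every $i$ with $x(i)>y(i)$ there exist $j$ with $x(j)<y(j)$ and $\epsilon_0>0$ such that $f(x)+f(y)\ge f(x-\epsilon(\chi_i-\chi_j))+f(y+\epsilon(\chi_i-\chi_j))$ for all $\epsilon\in[0,\epsilon_0]$. For $x\in\operatorname{dom}_{\mathbb{R}} f$, $f'_{\mathbb{R}}(x;i,j)=\lim_{\alpha\downarrow0}(f(x+\alpha(\chi_i-\chi_j))-f(x))/\alpha$ (possibly $+\infty$), $\phi_{\mathbb{R}}(x)=\min_{i,j\in N}f'_{\mathbb{R}}(x;i,j)$, and $\bar c_{\mathbb{R}}(x;i,j)=\max\{\lambda\ge0: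 f(x+\lambda(\chi_i-\chi_j))-f(x)=\lambda f'_{\mathbb{R}}(x;i,j)\}$. Procedure PM-IncSlope$(x)$ (for $\phi_{\mathbb{R}}(x)<0$): set $y:=x$; for each $i\in N$ (each once, arbitrary order) and each $j\in N\setminus\{i\}$ (each once, arbitrary order), if $f'_{\mathbb{R}}(y;i,j)=\phi_{\mathbb{R}}(x)$ replace $y$ by $y+\bar c_{\mathbb{R}}(y;i,j)(\chi_i-\chi_j)$; output $y$. *)

theory Defs
  imports "HOL-Analysis.Analysis"
begin

text \<open>Functions R^n -> R \<union> {+\<infinity>} are modelled as maps into ereal never taking -\<infinity>.
  The index set N is the (finite) index type 'n; the unit vector chi_i is axis i 1.\<close>

definition dom_R :: "(real^'n \<Rightarrow> ereal) \<Rightarrow> (real^'n) set" where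
  "dom_R f = {x. f x < \<infinity>}"

definition polyhedral_convex :: "(real^'n \<Rightarrow> ereal) \<Rightarrow> bool" where
  "polyhedral_convex f \<longleftrightarrow> (\<forall>x. f x \<noteq> -\<infinity>) \<and>
     polyhedron {(x, t::real). f x \<le> ereal t} \<and> dom_R f \<noteq> {}"

definition dvec :: "'n::finite \<Rightarrow> 'n \<Rightarrow> real^'n" where
  "dvec i j = axis i 1 - axis j 1"

definition M_convex :: "(real^'n::finite \<Rightarrow> ereal) \<Rightarrow> bool" where
  "M_convex f \<longleftrightarrow> polyhedral_convex f \<and>
    (\<forall>x\<in>dom_R f. \<forall>y\<in>dom_R f. \<forall>i. x$i > y$i \<longrightarrow>
      (\<exists>j. x$j < y$j \<and> (\<exists>\<epsilon>0>0. \<forall>\<epsilon>\<in>{0..\<epsilon>0}.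
         f x + f y \<ge> f (x - \<epsilon> *\<^sub>R dvec i j) + f (y + \<epsilon> *\<^sub>R dvec i j))))"

definition dderiv :: "(real^'n::finite \<Rightarrow> ereal) \<Rightarrow> real^'n \<Rightarrow> 'n \<Rightarrow> 'n \<Rightarrow> ereal" where
  "dderiv f x i j = Lim (at_right (0::real))
      (\<lambda>\<alpha>. (f (x + \<alpha> *\<^sub>R dvec i j) - f x) / ereal \<alpha>)"

definition phi :: "(real^'n::finite \<Rightarrow> ereal) \<Rightarrow> real^'n \<Rightarrow> ereal" where
  "phi f x = Min {dderiv f x i j | i j. True}"

definition cbar :: "(real^'n::finite \<Rightarrow> ereal) \<Rightarrow> real^'n \<Rightarrow> 'n \<Rightarrow> 'n \<Rightarrow> real" where
  "cbar f x i j = (GREATEST lam::real. lam \<ge> 0 \<and>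
      f (x + lam *\<^sub>R dvec i j) - f x = ereal lam * dderiv f x i j)"

text \<open>One elementary update of PM-IncSlope, with slope value p = phi(x) of the input x.\<close>
definition incslope_step :: "(real^'n::finite \<Rightarrow> ereal) \<Rightarrow> ereal \<Rightarrow> 'n \<Rightarrow> 'n \<Rightarrow> real^'n \<Rightarrow> real^'n" where
  "incslope_step f p i j y =
     (if dderiv f y i j = p then y + cbar f y i j *\<^sub>R dvec i j else y)"

definition pm_incslope :: "(real^'n::finite \<Rightarrow> ereal) \<Rightarrow> 'n list \<Rightarrow> ('n \<Rightarrow> 'n list) \<Rightarrow> real^'n \<Rightarrow> real^'n" where
  "pm_incslope f is js x =
     fold (\<lambda>i y. fold (\<lambda>j. incslope_step f (phi f x) i j) (js i) y) is x"

definition valid_orders :: "'n::finite list \<Rightarrow> ('n \<Rightarrow> 'n list) \<Rightarrow> bool" where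
  "valid_orders is js \<longleftrightarrow> distinct is \<and> set is = UNIV \<and>
     (\<forall>i. distinct (js i) \<and> set (js i) = UNIV - {i})"

text \<open>y is a possible output of PM-IncSlope(x) (for some admissible choice of the orders).\<close>
definition incslope_out :: "(real^'n::finite \<Rightarrow> ereal) \<Rightarrow> real^'n \<Rightarrow> real^'n \<Rightarrow> bool" where
  "incslope_out f x y \<longleftrightarrow> (\<exists>is js. valid_orders is js \<and> y = pm_incslope f is js x)"

definition lsd2_run :: "(real^'n::finite \<Rightarrow> ereal) \<Rightarrow> real^'n \<Rightarrow> (nat \<Rightarrow> real^'n) \<Rightarrow> nat \<Rightarrow> bool" where
  "lsd2_run f x0 xs m \<longleftrightarrow> xs 0 = x0 \<and>
     (\<forall>k<m. phi f (xs k) < 0 \<and> incslope_out f (xs k) (xs (Suc k)))"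

end

theory Submission
  imports Defs
begin

lemma rep_exists:
  fixes f :: "real^'n::finite \<Rightarrow> ereal"
  assumes "polyhedral_convex f"
  shows "\<exists>F::(((real^'n) \<times> real) set) set. \<exists>A B C. finite F \<and>
     (\<forall>x t. f x \<le> ereal t \<longleftrightarrow> (\<forall>h\<in>F. A h \<bullet> x + B h * t \<le> C h))"
proof -
  from assms have "polyhedron {(x, t::real). f x \<le> ereal t}"
    unfolding polyhedral_convex_def by (elim conjE)
  then obtain F where F: "finite F" "{(x, t::real). f x \<le> ereal t} = \<Inter>F"
      "\<forall>h\<in>F. \<exists>a b. a \<noteq> 0 \<and> h = {x. a \<bullet> x \<le> b}"
    unfolding polyhedron_def by (elim exE conjE) (rule that)
  have "\<forall>h\<in>F. \<exists>ab. h = {x. fst ab \<bullet> x \<le> snd ab}"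
  proof
    fix h assume "h \<in> F"
    then obtain a b where "h = {x. a \<bullet> x \<le> b}" using F(3) by blast
    thus "\<exists>ab. h = {x. fst ab \<bullet> x \<le> snd ab}" by (intro exI[of _ "(a,b)"]) simp
  qed
  from bchoice[OF this] obtain ab where ab: "\<forall>h\<in>F. h = {x. fst (ab h) \<bullet> x \<le> snd (ab h)}" by blast
  define A where "A h = fst (fst (ab h))" for h
  define B where "B h = snd (fst (ab h))" for h
  define C where "C h = snd (ab h)" for h
  have rep: "\<forall>x t. f x \<le> ereal t \<longleftrightarrow> (\<forall>h\<in>F. A h \<bullet> x + B h * t \<le> C h)"
  proof (intro allI)
    fix x t
    have "f x \<le> ereal t \<longleftrightarrow> (x,t) \<in> {(x, t::real). f x \<le> ereal t}" by simp
    also have "\<dots> \<longleftrightarrow> (x,t) \<in> \<Inter>F" by (simp only: F(2))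
    also have "\<dots> \<longleftrightarrow> (\<forall>h\<in>F. (x,t) \<in> h)" by simp
    also have "\<dots> \<longleftrightarrow> (\<forall>h\<in>F. A h \<bullet> x + B h * t \<le> C h)"
    proof (rule ball_cong[OF refl])
      fix h assume h: "h \<in> F"
      have e: "h = {x. fst (ab h) \<bullet> x \<le> snd (ab h)}" using ab h by blast
      have "fst (ab h) \<bullet> (x,t) = A h \<bullet> x + B h * t"
        unfolding A_def B_def by (cases "fst (ab h)") simp
      thus "(x,t) \<in> h \<longleftrightarrow> A h \<bullet> x + B h * t \<le> C h"
        unfolding C_def by (subst e) simp
    qed
    finally show "f x \<le> ereal t \<longleftrightarrow> (\<forall>h\<in>F. A h \<bullet> x + B h * t \<le> C h)" .
  qed
  show ?thesis
    apply (rule exI[where x=F])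
    apply (rule exI[where x=A])
    apply (rule exI[where x=B])
    apply (rule exI[where x=C])
    using F(1) rep by simp
qed

definition n1 :: "real^'n::finite \<Rightarrow> real" where
  "n1 v = (\<Sum>k\<in>UNIV. \<bar>v$k\<bar>)"

definition ddir :: "(real^'n::finite \<Rightarrow> ereal) \<Rightarrow> real^'n \<Rightarrow> real^'n \<Rightarrow> ereal" where
  "ddir f x e = Lim (at_right (0::real)) (\<lambda>\<alpha>. (f (x + \<alpha> *\<^sub>R e) - f x) / ereal \<alpha>)"

lemma dderiv_ddir: "dderiv f x i j = ddir f x (dvec i j)"
  unfolding dderiv_def ddir_def ..

lemma dvec_nth: "dvec i j $ k = (if k = i then 1 else 0) - (if k = j then 1 else 0)"
  unfolding dvec_def by (simp add: axis_def)

lemma n1_dvec: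
  assumes "a \<noteq> b"
  shows "n1 (v + t *\<^sub>R dvec a b) = n1 v - \<bar>v$a\<bar> - \<bar>v$b\<bar> + \<bar>v$a + t\<bar> + \<bar>v$b - t\<bar>"
proof -
  have "n1 (v + t *\<^sub>R dvec a b) = (\<Sum>k\<in>UNIV. \<bar>v$k + t * ((if k = a then 1 else 0) - (if k = b then 1 else 0))\<bar>)"
    unfolding n1_def by (simp add: dvec_nth)
  also have "\<dots> = (\<Sum>k\<in>UNIV. \<bar>v$k\<bar> + (if k = a then \<bar>v$a + t\<bar> - \<bar>v$a\<bar> else 0) + (if k = b then \<bar>v$b - t\<bar> - \<bar>v$b\<bar> else 0))"
    by (rule sum.cong) (use assms in auto)
  also have "\<dots> = n1 v + (\<bar>v$a + t\<bar> - \<bar>v$a\<bar>) + (\<bar>v$b - t\<bar> - \<bar>v$b\<bar>)"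
    unfolding n1_def by (simp add: sum.distrib)
  finally show ?thesis by simp
qed

lemma n1_dvec_le:
  assumes "t \<ge> 0"
  shows "n1 (v + t *\<^sub>R dvec a b) \<le> n1 v + 2 * t"
proof (cases "a = b")
  case True thus ?thesis using assms by (simp add: dvec_def)
next
  case False thus ?thesis using n1_dvec[OF False, of v t] assms by linarith
qed

lemma n1_zero[simp]: "n1 0 = 0" by (simp add: n1_def)


lemma Lim_ev:
  assumes "eventually (\<lambda>\<alpha>. g \<alpha> = c) (at_right (0::real))"
  shows "Lim (at_right (0::real)) g = c"
  by (rule tendsto_Lim) (simp_all add: tendsto_eventually[OF assms])

lemma slack_ev:
  fixes s r :: "'h \<Rightarrow> real"
  assumes "finite H" "\<forall>h\<in>H. s h > 0"
  shows "\<exists>\<delta>>0. \<forall>\<tau>. 0 < \<tau> \<and> \<tau> \<le> \<delta> \<longrightarrow> (\<forall>h\<in>H. \<tau> * r h < s h)"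
proof -
  have "\<forall>h\<in>H. eventually (\<lambda>\<tau>. \<tau> * r h < s h) (at_right (0::real))"
  proof
    fix h assume "h \<in> H"
    have "((\<lambda>\<tau>. \<tau> * r h) \<longlongrightarrow> 0 * r h) (at_right (0::real))"
      by (intro tendsto_intros)
    thus "eventually (\<lambda>\<tau>. \<tau> * r h < s h) (at_right (0::real))"
      using assms(2) \<open>h \<in> H\<close> by (auto dest: order_tendstoD(2))
  qed
  from eventually_ball_finite[OF assms(1) this]
  obtain b where b: "b > 0" "\<forall>y>0. y < b \<longrightarrow> (\<forall>h\<in>H. y * r h < s h)"
    unfolding eventually_at_right_field by auto
  show ?thesis using b by (intro exI[of _ "b/2"]) auto
qed

lemma ereal_eq_from_le_iff:
  assumes "X \<noteq> -\<infinity>" "\<And>t. X \<le> ereal t \<longleftrightarrow> T \<le> t"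
  shows "X = ereal T"
proof (cases X)
  case (real r)
  with assms(2)[of r] assms(2)[of T] show ?thesis by auto
next
  case PInf with assms(2)[of T] show ?thesis by simp
next
  case MInf with assms(1) show ?thesis by simp
qed

locale mcr =
  fixes f :: "real^'n::finite \<Rightarrow> ereal" and F :: "'h set"
    and A :: "'h \<Rightarrow> real^'n" and B :: "'h \<Rightarrow> real" and C :: "'h \<Rightarrow> real"
  assumes Mc: "M_convex f" and bd: "bounded (dom_R f)" and finF: "finite F"
    and rep: "\<And>x t. f x \<le> ereal t \<longleftrightarrow> (\<forall>h\<in>F. A h \<bullet> x + B h * t \<le> C h)"
begin

lemma notminf: "f x \<noteq> -\<infinity>"
  using Mc unfolding M_convex_def polyhedral_convex_def by blast

lemma dom_real: "x \<in> dom_R f \<Longrightarrow> f x = ereal (real_of_ereal (f x))"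
  using notminf[of x] unfolding dom_R_def by (cases "f x") auto

lemma dom_iff: "x \<in> dom_R f \<longleftrightarrow> f x \<noteq> \<infinity>"
  unfolding dom_R_def by (cases "f x") auto

lemma closed_sub:
  fixes \<phi> :: "'b::topological_space \<Rightarrow> real^'n" and g :: "'b \<Rightarrow> real"
  assumes "continuous_on UNIV \<phi>" "continuous_on UNIV g"
  shows "closed {s. f (\<phi> s) \<le> ereal (g s)}"
proof -
  have "{s. f (\<phi> s) \<le> ereal (g s)} = (\<Inter>h\<in>F. {s. A h \<bullet> \<phi> s + B h * g s \<le> C h})"
    using rep by auto
  also have "closed \<dots>"
    by (intro closed_INT ballI closed_Collect_le continuous_intros assms)
  finally show ?thesis .
qed

lemma convex_f:
  assumes "u \<in> dom_R f" "w \<in> dom_R f" "0 \<le> \<theta>" "\<theta> \<le> 1"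
  shows "f ((1-\<theta>) *\<^sub>R u + \<theta> *\<^sub>R w) \<le> ereal ((1-\<theta>) * real_of_ereal (f u) + \<theta> * real_of_ereal (f w))"
proof -
  define tu where "tu = real_of_ereal (f u)"
  define tw where "tw = real_of_ereal (f w)"
  have U: "\<forall>h\<in>F. A h \<bullet> u + B h * tu \<le> C h" using rep[of u tu] dom_real[OF assms(1)] tu_def by simp
  have W: "\<forall>h\<in>F. A h \<bullet> w + B h * tw \<le> C h" using rep[of w tw] dom_real[OF assms(2)] tw_def by simp
  have "\<forall>h\<in>F. A h \<bullet> ((1-\<theta>) *\<^sub>R u + \<theta> *\<^sub>R w) + B h * ((1-\<theta>) * tu + \<theta> * tw) \<le> C h"
  proof
    fix h assume h: "h \<in> F"
    have eq: "A h \<bullet> ((1-\<theta>) *\<^sub>R u + \<theta> *\<^sub>R w) + B h * ((1-\<theta>) * tu + \<theta> * tw)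
        = (1-\<theta>) * (A h \<bullet> u + B h * tu) + \<theta> * (A h \<bullet> w + B h * tw)"
      by (simp add: inner_add_right algebra_simps)
    have "(1-\<theta>) * (A h \<bullet> u + B h * tu) \<le> (1-\<theta>) * C h"
      using U h assms(4) by (intro mult_left_mono) auto
    moreover have "\<theta> * (A h \<bullet> w + B h * tw) \<le> \<theta> * C h"
      using W h assms(3) by (intro mult_left_mono) auto
    ultimately show "A h \<bullet> ((1-\<theta>) *\<^sub>R u + \<theta> *\<^sub>R w) + B h * ((1-\<theta>) * tu + \<theta> * tw) \<le> C h"
      unfolding eq by (simp add: algebra_simps)
  qed
  thus ?thesis using rep tu_def tw_def by simp
qed

lemma B_nonpos:
  assumes z: "z \<in> dom_R f" and h: "h \<in> F"
  shows "B h \<le> 0"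
proof (rule ccontr)
  assume Bp: "\<not> B h \<le> 0"
  define t0 where "t0 = real_of_ereal (f z)"
  have z0: "A h \<bullet> z + B h * t0 \<le> C h" using rep[of z t0] dom_real[OF z] t0_def h by simp
  define t where "t = t0 + (C h - A h \<bullet> z - B h * t0) / B h + 1"
  have "t0 \<le> t" using Bp z0 unfolding t_def by (simp add: divide_nonneg_pos)
  hence "f z \<le> ereal t" using dom_real[OF z] t0_def by (metis ereal_less_eq(3))
  hence "A h \<bullet> z + B h * t \<le> C h" using rep h by blast
  moreover have "B h * t = C h - A h \<bullet> z + B h"
    using Bp unfolding t_def by (simp add: field_simps)
  ultimately show False using Bp by simp
qed


definition Q :: "real^'n \<Rightarrow> real set" where
  "Q e = {A h \<bullet> e / - B h | h. h \<in> F \<and> B h < 0}"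

lemma finite_Q: "finite (Q e)"
proof -
  have "Q e = (\<lambda>h. A h \<bullet> e / - B h) ` {h\<in>F. B h < 0}" unfolding Q_def by blast
  thus ?thesis using finF by simp
qed

lemma LL:
  assumes z: "z \<in> dom_R f"
  shows "\<exists>\<delta>>0. (ddir f z e = \<infinity> \<and> (\<forall>\<alpha>. 0 < \<alpha> \<longrightarrow> \<alpha> \<le> \<delta> \<longrightarrow> f (z + \<alpha> *\<^sub>R e) = \<infinity>)) \<or>
     (\<exists>q. ddir f z e = ereal q \<and> q \<in> Q e \<and>
        (\<forall>\<alpha>. 0 \<le> \<alpha> \<longrightarrow> \<alpha> \<le> \<delta> \<longrightarrow> f (z + \<alpha> *\<^sub>R e) = f z + ereal (\<alpha> * q)))"
proof -
  define t0 where "t0 = real_of_ereal (f z)"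
  have fz: "f z = ereal t0" using dom_real[OF z] t0_def by simp
  have z0: "\<forall>h\<in>F. A h \<bullet> z + B h * t0 \<le> C h" using rep[of z t0] fz by simp
  have Bn: "\<forall>h\<in>F. B h \<le> 0" using B_nonpos[OF z] by blast
  define H0 where "H0 = {h\<in>F. A h \<bullet> z + B h * t0 = C h}"
  have lin: "A h \<bullet> (z + \<alpha> *\<^sub>R e) = A h \<bullet> z + \<alpha> * (A h \<bullet> e)" for h \<alpha>
    by (simp add: inner_add_right)
  show ?thesis
  proof (cases "\<exists>h\<in>H0. B h = 0 \<and> A h \<bullet> e > 0")
    case True
    then obtain h where h: "h \<in> F" "A h \<bullet> z = C h" "B h = 0" "A h \<bullet> e > 0"
      unfolding H0_def by auto
    have inf: "f (z + \<alpha> *\<^sub>R e) = \<infinity>" if "\<alpha> > 0" for \<alpha>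
    proof (rule ccontr)
      assume "f (z + \<alpha> *\<^sub>R e) \<noteq> \<infinity>"
      hence "f (z + \<alpha> *\<^sub>R e) \<le> ereal (real_of_ereal (f (z + \<alpha> *\<^sub>R e)))"
        using notminf by (cases "f (z + \<alpha> *\<^sub>R e)") auto
      hence "A h \<bullet> (z + \<alpha> *\<^sub>R e) + B h * real_of_ereal (f (z + \<alpha> *\<^sub>R e)) \<le> C h"
        using rep h(1) by blast
      thus False using h that mult_pos_pos[OF that h(4)] unfolding lin by simp
    qed
    have "ddir f z e = \<infinity>"
      unfolding ddir_def
    proof (rule Lim_ev)
      show "eventually (\<lambda>\<alpha>. (f (z + \<alpha> *\<^sub>R e) - f z) / ereal \<alpha> = \<infinity>) (at_right (0::real))"
        unfolding eventually_at_right_field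
        by (intro exI[of _ 1]) (auto simp: inf fz)
    qed
    thus ?thesis using inf by (intro exI[of _ 1]) auto
  next
    case False
    hence H0e: "\<forall>h\<in>H0. B h = 0 \<longrightarrow> A h \<bullet> e \<le> 0" by auto
    define Q0 where "Q0 = (\<lambda>h. A h \<bullet> e / - B h) ` {h\<in>H0. B h < 0}"
    have finQ0: "finite Q0" unfolding Q0_def H0_def using finF by simp
    define q where "q = Max Q0"
    define r where "r h = \<bar>A h \<bullet> e\<bar> + \<bar>B h\<bar> * \<bar>q\<bar> + \<bar>B h\<bar>" for h
    have "\<forall>h\<in>F - H0. C h - A h \<bullet> z - B h * t0 > 0"
      using z0 unfolding H0_def by force
    from slack_ev[OF _ this, of r] finF obtain \<delta> where \<delta>: "\<delta> > 0"
      "\<forall>\<tau>. 0 < \<tau> \<and> \<tau> \<le> \<delta> \<longrightarrow> (\<forall>h\<in>F - H0. \<tau> * r h < C h - A h \<bullet> z - B h * t0)"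
      by auto
    have ne: "Q0 \<noteq> {}"
    proof
      assume "Q0 = {}"
      hence H0B: "\<forall>h\<in>H0. B h = 0" using Bn unfolding Q0_def H0_def by force
      have "\<forall>h\<in>F. A h \<bullet> z + B h * (t0 - \<delta>) \<le> C h"
      proof
        fix h assume h: "h \<in> F"
        show "A h \<bullet> z + B h * (t0 - \<delta>) \<le> C h"
        proof (cases "h \<in> H0")
          case True thus ?thesis using H0B z0 h by auto
        next
          case False
          hence "\<delta> * r h < C h - A h \<bullet> z - B h * t0" using \<delta> h by auto
          moreover have "- B h \<le> r h" unfolding r_def using abs_ge_minus_self[of "B h"] abs_ge_zero[of "A h \<bullet> e"] mult_nonneg_nonneg[of "\<bar>B h\<bar>" "\<bar>q\<bar>"] by linarith
          ultimately have "\<delta> * (- B h) < C h - A h \<bullet> z - B h * t0"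
            using mult_left_mono[of "- B h" "r h" \<delta>] \<delta>(1) by linarith
          thus ?thesis by (simp add: algebra_simps)
        qed
      qed
      hence "f z \<le> ereal (t0 - \<delta>)" using rep by blast
      thus False using fz \<delta>(1) by simp
    qed
    have qQ0: "q \<in> Q0" unfolding q_def using finQ0 ne by simp
    then obtain hs where hs: "hs \<in> H0" "B hs < 0" "q = A hs \<bullet> e / - B hs"
      unfolding Q0_def by auto
    have qge: "A h \<bullet> e / - B h \<le> q" if "h \<in> H0" "B h < 0" for h
      unfolding q_def using finQ0 that unfolding Q0_def by simp
    have val: "f (z + \<alpha> *\<^sub>R e) = ereal (t0 + \<alpha> * q)" if \<alpha>: "0 \<le> \<alpha>" "\<alpha> \<le> \<delta>" for \<alpha>
    proof (rule ereal_eq_from_le_iff[OF notminf])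
      fix t
      show "f (z + \<alpha> *\<^sub>R e) \<le> ereal t \<longleftrightarrow> t0 + \<alpha> * q \<le> t"
      proof
        assume "f (z + \<alpha> *\<^sub>R e) \<le> ereal t"
        hence "A hs \<bullet> (z + \<alpha> *\<^sub>R e) + B hs * t \<le> C hs" using rep hs(1) unfolding H0_def by blast
        moreover have "A hs \<bullet> z + B hs * t0 = C hs" using hs(1) unfolding H0_def by simp
        moreover have "A hs \<bullet> e = - B hs * q" using hs(2,3) by simp
        ultimately have "B hs * t \<le> B hs * (t0 + \<alpha> * q)" unfolding lin by (simp add: algebra_simps)
        thus "t0 + \<alpha> * q \<le> t" using hs(2) by (simp add: mult_le_cancel_left)
      next
        assume tge: "t0 + \<alpha> * q \<le> t"
        have "\<forall>h\<in>F. A h \<bullet> (z + \<alpha> *\<^sub>R e) + B h * t \<le> C h"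
        proof
          fix h assume h: "h \<in> F"
          have "B h * t \<le> B h * (t0 + \<alpha> * q)" using tge Bn h by (simp add: mult_left_mono_neg)
          moreover have "A h \<bullet> z + \<alpha> * (A h \<bullet> e) + B h * (t0 + \<alpha> * q) \<le> C h"
          proof (cases "h \<in> H0")
            case True
            hence eq: "A h \<bullet> z + B h * t0 = C h" unfolding H0_def by simp
            show ?thesis
            proof (cases "B h = 0")
              case True
              hence "A h \<bullet> e \<le> 0" using H0e \<open>h \<in> H0\<close> by auto
              hence "\<alpha> * (A h \<bullet> e) \<le> 0" using \<alpha>(1) by (simp add: mult_nonneg_nonpos)
              thus ?thesis using eq True by simp
            next
              case False
              hence Bl: "B h < 0" using Bn h by force
              have "A h \<bullet> e / - B h \<le> q" using qge[OF \<open>h \<in> H0\<close> Bl] .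
              hence "A h \<bullet> e \<le> q * (- B h)" using Bl pos_divide_le_eq[of "- B h" "A h \<bullet> e" q] by linarith
              hence "A h \<bullet> e \<le> - B h * q" by (simp add: algebra_simps)
              hence "\<alpha> * (A h \<bullet> e) \<le> \<alpha> * (- B h * q)" using \<alpha>(1) by (rule mult_left_mono)
              thus ?thesis using eq by (simp add: algebra_simps)
            qed
          next
            case False
            show ?thesis
            proof (cases "\<alpha> = 0")
              case True thus ?thesis using z0 h by simp
            next
              case False
              hence "\<alpha> * r h < C h - A h \<bullet> z - B h * t0" using \<delta> h \<open>h \<notin> H0\<close> \<alpha> by auto
              moreover have "A h \<bullet> e + B h * q \<le> r h" unfolding r_def
                using abs_ge_self[of "A h \<bullet> e"] abs_ge_self[of "B h * q"] abs_mult[of "B h" q] abs_ge_zero[of "B h"] by linarith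
              ultimately have "\<alpha> * (A h \<bullet> e + B h * q) < C h - A h \<bullet> z - B h * t0"
                using mult_left_mono[of "A h \<bullet> e + B h * q" "r h" \<alpha>] \<alpha>(1) by linarith
              thus ?thesis by (simp add: algebra_simps)
            qed
          qed
          ultimately show "A h \<bullet> (z + \<alpha> *\<^sub>R e) + B h * t \<le> C h" unfolding lin by linarith
        qed
        thus "f (z + \<alpha> *\<^sub>R e) \<le> ereal t" using rep by blast
      qed
    qed
    have "ddir f z e = ereal q"
      unfolding ddir_def
    proof (rule Lim_ev)
      show "eventually (\<lambda>\<alpha>. (f (z + \<alpha> *\<^sub>R e) - f z) / ereal \<alpha> = ereal q) (at_right (0::real))"
        unfolding eventually_at_right_field
        by (intro exI[of _ \<delta>]) (auto simp: val fz \<delta>(1))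
    qed
    moreover have "q \<in> Q e" using hs unfolding Q_def H0_def by auto
    ultimately show ?thesis using val fz \<delta>(1) by (intro exI[of _ \<delta>]) auto
  qed
qed


lemma QM:
  assumes z: "z \<in> dom_R f" and D: "ddir f z e \<ge> ereal p" and \<alpha>: "0 \<le> \<alpha>"
  shows "f (z + \<alpha> *\<^sub>R e) \<ge> f z + ereal (\<alpha> * p)"
proof -
  define t0 where "t0 = real_of_ereal (f z)"
  have fz: "f z = ereal t0" using dom_real[OF z] t0_def by simp
  obtain \<delta> where \<delta>: "\<delta> > 0" and cases:
    "(ddir f z e = \<infinity> \<and> (\<forall>\<alpha>. 0 < \<alpha> \<longrightarrow> \<alpha> \<le> \<delta> \<longrightarrow> f (z + \<alpha> *\<^sub>R e) = \<infinity>)) \<or>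
     (\<exists>q. ddir f z e = ereal q \<and> q \<in> Q e \<and>
        (\<forall>\<alpha>. 0 \<le> \<alpha> \<longrightarrow> \<alpha> \<le> \<delta> \<longrightarrow> f (z + \<alpha> *\<^sub>R e) = f z + ereal (\<alpha> * q)))"
    using LL[OF z, of e] by (elim exE conjE) (rule that)
  show ?thesis
  proof (cases "\<alpha> = 0")
    case True thus ?thesis by simp
  next
    case False
    hence \<alpha>p: "\<alpha> > 0" using \<alpha> by simp
    show ?thesis
    proof (cases "f (z + \<alpha> *\<^sub>R e) = \<infinity>")
      case True thus ?thesis by simp
    next
      case fin: False
      define tw where "tw = real_of_ereal (f (z + \<alpha> *\<^sub>R e))"
      have wdom: "z + \<alpha> *\<^sub>R e \<in> dom_R f" using fin dom_iff by simp
      have fw: "f (z + \<alpha> *\<^sub>R e) = ereal tw" using dom_real[OF wdom] tw_def by simp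
      define \<beta> where "\<beta> = min \<delta> \<alpha>"
      have \<beta>: "0 < \<beta>" "\<beta> \<le> \<delta>" "\<beta> \<le> \<alpha>" using \<delta> \<alpha>p unfolding \<beta>_def by auto
      define \<theta> where "\<theta> = \<beta> / \<alpha>"
      have \<theta>: "0 \<le> \<theta>" "\<theta> \<le> 1" "\<theta> * \<alpha> = \<beta>" using \<beta> \<alpha>p unfolding \<theta>_def by auto
      have "(1 - \<theta>) *\<^sub>R z + \<theta> *\<^sub>R (z + \<alpha> *\<^sub>R e) = z + (\<theta> * \<alpha>) *\<^sub>R e"
        by (simp add: scaleR_add_right scaleR_diff_left)
      hence veq: "(1 - \<theta>) *\<^sub>R z + \<theta> *\<^sub>R (z + \<alpha> *\<^sub>R e) = z + \<beta> *\<^sub>R e"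
        using \<theta>(3) by simp
      have cv: "f (z + \<beta> *\<^sub>R e) \<le> ereal ((1 - \<theta>) * t0 + \<theta> * tw)"
        using convex_f[OF z wdom \<theta>(1,2)] unfolding veq fz fw by simp
      from cases show ?thesis
      proof
        assume "ddir f z e = \<infinity> \<and> (\<forall>\<alpha>. 0 < \<alpha> \<longrightarrow> \<alpha> \<le> \<delta> \<longrightarrow> f (z + \<alpha> *\<^sub>R e) = \<infinity>)"
        hence "f (z + \<beta> *\<^sub>R e) = \<infinity>" using \<beta> by blast
        with cv show ?thesis by simp
      next
        assume "\<exists>q. ddir f z e = ereal q \<and> q \<in> Q e \<and>
          (\<forall>\<alpha>. 0 \<le> \<alpha> \<longrightarrow> \<alpha> \<le> \<delta> \<longrightarrow> f (z + \<alpha> *\<^sub>R e) = f z + ereal (\<alpha> * q))"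
        then obtain q where q: "ddir f z e = ereal q"
          "\<forall>\<alpha>. 0 \<le> \<alpha> \<longrightarrow> \<alpha> \<le> \<delta> \<longrightarrow> f (z + \<alpha> *\<^sub>R e) = f z + ereal (\<alpha> * q)" by blast
        have qp: "p \<le> q" using D q(1) by simp
        have "f (z + \<beta> *\<^sub>R e) = ereal (t0 + \<beta> * q)" using q(2) \<beta> fz by simp
        with cv have "t0 + \<beta> * q \<le> (1 - \<theta>) * t0 + \<theta> * tw" by simp
        moreover have "\<beta> * q = \<theta> * (\<alpha> * q)" using \<theta>(3) by (simp add: mult.assoc[symmetric])
        moreover have "(1 - \<theta>) * t0 + \<theta> * tw = t0 + \<theta> * (tw - t0)" by (simp add: left_diff_distrib right_diff_distrib)
        ultimately have "\<theta> * (\<alpha> * q) \<le> \<theta> * (tw - t0)" by linarith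
        moreover have "\<theta> > 0" using \<beta>(1) \<alpha>p unfolding \<theta>_def by simp
        ultimately have "\<alpha> * q \<le> tw - t0" by (simp add: mult_le_cancel_left)
        moreover have "\<alpha> * p \<le> \<alpha> * q" using qp \<alpha> by (simp add: mult_left_mono)
        ultimately show ?thesis using fz fw by simp
      qed
    qed
  qed
qed

lemma DLE:
  assumes z: "z \<in> dom_R f" and \<epsilon>1: "\<epsilon>1 > 0"
    and H: "\<forall>\<epsilon>. 0 < \<epsilon> \<longrightarrow> \<epsilon> \<le> \<epsilon>1 \<longrightarrow> f (z + \<epsilon> *\<^sub>R e) \<le> f z + ereal (\<epsilon> * p)"
  shows "ddir f z e \<le> ereal p"
proof -
  define t0 where "t0 = real_of_ereal (f z)"
  have fz: "f z = ereal t0" using dom_real[OF z] t0_def by simp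
  obtain \<delta> where \<delta>: "\<delta> > 0" and cases:
    "(ddir f z e = \<infinity> \<and> (\<forall>\<alpha>. 0 < \<alpha> \<longrightarrow> \<alpha> \<le> \<delta> \<longrightarrow> f (z + \<alpha> *\<^sub>R e) = \<infinity>)) \<or>
     (\<exists>q. ddir f z e = ereal q \<and> q \<in> Q e \<and>
        (\<forall>\<alpha>. 0 \<le> \<alpha> \<longrightarrow> \<alpha> \<le> \<delta> \<longrightarrow> f (z + \<alpha> *\<^sub>R e) = f z + ereal (\<alpha> * q)))"
    using LL[OF z, of e] by (elim exE conjE) (rule that)
  define \<beta> where "\<beta> = min \<delta> \<epsilon>1"
  have \<beta>: "0 < \<beta>" "\<beta> \<le> \<delta>" "\<beta> \<le> \<epsilon>1" using \<delta> \<epsilon>1 unfolding \<beta>_def by auto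
  have Hb: "f (z + \<beta> *\<^sub>R e) \<le> ereal (t0 + \<beta> * p)" using H \<beta> fz by simp
  from cases show ?thesis
  proof
    assume "ddir f z e = \<infinity> \<and> (\<forall>\<alpha>. 0 < \<alpha> \<longrightarrow> \<alpha> \<le> \<delta> \<longrightarrow> f (z + \<alpha> *\<^sub>R e) = \<infinity>)"
    hence "f (z + \<beta> *\<^sub>R e) = \<infinity>" using \<beta> by blast
    with Hb show ?thesis by simp
  next
    assume "\<exists>q. ddir f z e = ereal q \<and> q \<in> Q e \<and>
      (\<forall>\<alpha>. 0 \<le> \<alpha> \<longrightarrow> \<alpha> \<le> \<delta> \<longrightarrow> f (z + \<alpha> *\<^sub>R e) = f z + ereal (\<alpha> * q))"
    then obtain q where q: "ddir f z e = ereal q"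
      "\<forall>\<alpha>. 0 \<le> \<alpha> \<longrightarrow> \<alpha> \<le> \<delta> \<longrightarrow> f (z + \<alpha> *\<^sub>R e) = f z + ereal (\<alpha> * q)" by blast
    have "f (z + \<beta> *\<^sub>R e) = ereal (t0 + \<beta> * q)" using q(2) \<beta> fz by simp
    with Hb have "\<beta> * q \<le> \<beta> * p" by simp
    hence "q \<le> p" using \<beta>(1) by (simp add: mult_le_cancel_left)
    thus ?thesis using q(1) by simp
  qed
qed

lemma ereal_exch:
  assumes "ereal a + ereal b \<ge> X + Y" "Y \<ge> ereal c" "X \<noteq> -\<infinity>"
  shows "X \<le> ereal (a + b - c)"
  using assms by (cases X; cases Y) auto

lemma exch:
  assumes "x \<in> dom_R f" "y \<in> dom_R f" "x$i > y$i"
  shows "\<exists>j. x$j < y$j \<and> (\<exists>\<epsilon>0>0. \<forall>\<epsilon>\<in>{0..\<epsilon>0}.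
         f x + f y \<ge> f (x - \<epsilon> *\<^sub>R dvec i j) + f (y + \<epsilon> *\<^sub>R dvec i j))"
  using Mc assms unfolding M_convex_def by blast

lemma exists_gt:
  assumes "x \<in> dom_R f" "y \<in> dom_R f" "x \<noteq> y"
  shows "\<exists>i. y$i > x$i"
proof -
  obtain k where k: "x$k \<noteq> y$k" using assms(3) by (auto simp: vec_eq_iff)
  show ?thesis
  proof (cases "y$k > x$k")
    case True thus ?thesis by blast
  next
    case False
    hence "x$k > y$k" using k by simp
    from exch[OF assms(1,2) this] show ?thesis by blast
  qed
qed

lemma cont_n1: "continuous_on UNIV (\<lambda>y. n1 (y - x))"
  unfolding n1_def by (intro continuous_intros)

lemma n1_shift:
  assumes "i \<noteq> j" "v$i \<ge> \<epsilon>" "v$j \<le> - \<epsilon>" "\<epsilon> \<ge> 0"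
  shows "n1 (v + (- \<epsilon>) *\<^sub>R dvec i j) = n1 v - 2 * \<epsilon>"
  using n1_dvec[OF assms(1), of v "- \<epsilon>"] assms(2-4) by simp

definition Lb :: "real^'n \<Rightarrow> real \<Rightarrow> real^'n \<Rightarrow> ereal" where
  "Lb x p w = ereal (real_of_ereal (f x) + p / 2 * n1 (w - x))"

lemma G:
  assumes x: "x \<in> dom_R f" and p: "p \<le> 0"
    and hyp: "\<forall>i j. ddir f x (dvec i j) \<ge> ereal p"
  shows "f y \<ge> Lb x p y"
proof (rule ccontr)
  assume "\<not> f y \<ge> Lb x p y"
  hence lt: "f y < Lb x p y" by simp
  define fx where "fx = real_of_ereal (f x)"
  have fxe: "f x = ereal fx" using dom_real[OF x] fx_def by simp
  have ydom: "y \<in> dom_R f" using lt unfolding Lb_def dom_R_def by (auto intro: less_le_trans)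
  define fy where "fy = real_of_ereal (f y)"
  have fye: "f y = ereal fy" using dom_real[OF ydom] fy_def by simp
  define \<eta> where "\<eta> = fx + p/2 * n1 (y - x) - fy"
  have \<eta>: "\<eta> > 0" using lt fye unfolding \<eta>_def Lb_def fx_def by simp
  define K where "K = {w. f w \<le> ereal (fx + p/2 * n1 (w - x) - \<eta>)}"
  have Kc: "closed K" unfolding K_def
    by (rule closed_sub) (intro continuous_intros cont_n1)+
  have Kd: "K \<subseteq> dom_R f" unfolding K_def dom_R_def by (auto intro: le_less_trans)
  have "bounded K" using bounded_subset[OF bd Kd] .
  hence Kcomp: "compact K" using Kc by (simp add: compact_eq_bounded_closed)
  have yK: "y \<in> K" unfolding K_def \<eta>_def using fye by simp
  obtain ys where ys: "ys \<in> K" "\<forall>w\<in>K. n1 (ys - x) \<le> n1 (w - x)"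
    using continuous_attains_inf[OF Kcomp _ continuous_on_subset[OF cont_n1[of x] subset_UNIV]] yK
    by blast
  have ysd: "ys \<in> dom_R f" using ys(1) Kd by blast
  have "ys \<noteq> x"
  proof
    assume "ys = x"
    with ys(1) have "f x \<le> ereal (fx - \<eta>)" unfolding K_def by simp
    with fxe \<eta> show False by simp
  qed
  then obtain i where i: "ys$i > x$i" using exists_gt[OF x ysd] by metis
  from exch[OF ysd x i] obtain j \<epsilon>0 where j: "ys$j < x$j" "\<epsilon>0 > 0"
    "\<forall>\<epsilon>\<in>{0..\<epsilon>0}. f ys + f x \<ge> f (ys - \<epsilon> *\<^sub>R dvec i j) + f (x + \<epsilon> *\<^sub>R dvec i j)"
    by blast
  have ij: "i \<noteq> j" using i j(1) by auto
  define \<epsilon> where "\<epsilon> = min \<epsilon>0 (min (ys$i - x$i) (x$j - ys$j))"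
  have \<epsilon>: "\<epsilon> > 0" "\<epsilon> \<le> \<epsilon>0" "\<epsilon> \<le> ys$i - x$i" "\<epsilon> \<le> x$j - ys$j"
    using i j unfolding \<epsilon>_def by auto
  have ex: "f ys + f x \<ge> f (ys - \<epsilon> *\<^sub>R dvec i j) + f (x + \<epsilon> *\<^sub>R dvec i j)"
    using j(3) \<epsilon> by auto
  have qm: "f (x + \<epsilon> *\<^sub>R dvec i j) \<ge> ereal (fx + \<epsilon> * p)"
    using QM[OF x hyp[rule_format, of i j], of \<epsilon>] \<epsilon> fxe by simp
  define fys where "fys = real_of_ereal (f ys)"
  have fyse: "f ys = ereal fys" using dom_real[OF ysd] fys_def by simp
  have le1: "f (ys - \<epsilon> *\<^sub>R dvec i j) \<le> ereal (fys + fx - (fx + \<epsilon> * p))"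
    by (rule ereal_exch[OF _ qm notminf]) (use ex fyse fxe in simp)
  have n1e: "n1 (ys - \<epsilon> *\<^sub>R dvec i j - x) = n1 (ys - x) - 2 * \<epsilon>"
  proof -
    have e1: "ys - \<epsilon> *\<^sub>R dvec i j - x = (ys - x) + (- \<epsilon>) *\<^sub>R dvec i j" by (simp add: algebra_simps)
    have "(ys - x) $ i \<ge> \<epsilon>" "(ys - x) $ j \<le> - \<epsilon>" using \<epsilon> by auto
    from n1_shift[OF ij this] \<epsilon>(1) show ?thesis unfolding e1 by simp
  qed
  have fysK: "fys \<le> fx + p/2 * n1 (ys - x) - \<eta>" using ys(1) fyse unfolding K_def by simp
  have "f (ys - \<epsilon> *\<^sub>R dvec i j) \<le> ereal (fx + p/2 * n1 (ys - \<epsilon> *\<^sub>R dvec i j - x) - \<eta>)"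
  proof -
    have "fys + fx - (fx + \<epsilon> * p) \<le> fx + p/2 * n1 (ys - \<epsilon> *\<^sub>R dvec i j - x) - \<eta>"
      using fysK unfolding n1e by (simp add: algebra_simps)
    thus ?thesis using le1 by (meson ereal_less_eq(3) order_trans)
  qed
  hence "ys - \<epsilon> *\<^sub>R dvec i j \<in> K" unfolding K_def by simp
  with ys(2) have "n1 (ys - x) \<le> n1 (ys - \<epsilon> *\<^sub>R dvec i j - x)" by blast
  with n1e \<epsilon>(1) show False by simp
qed


lemma LLq:
  assumes z: "z \<in> dom_R f" and ni: "ddir f z e \<noteq> \<infinity>"
  shows "\<exists>q \<delta>. ddir f z e = ereal q \<and> \<delta> > 0 \<and>
     (\<forall>\<alpha>. 0 \<le> \<alpha> \<longrightarrow> \<alpha> \<le> \<delta> \<longrightarrow> f (z + \<alpha> *\<^sub>R e) = f z + ereal (\<alpha> * q))"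
  using LL[OF z, of e] ni by blast

lemma n1_exact:
  assumes "a \<noteq> b" "v$a \<ge> 0" "v$b \<le> 0" "t \<ge> 0"
  shows "n1 (v + t *\<^sub>R dvec a b) = n1 v + 2 * t"
  using n1_dvec[OF assms(1), of v t] assms(2-4) by simp

lemma vec_comp: "(v + t *\<^sub>R dvec a b) $ k = v$k + t * ((if k = a then 1 else 0) - (if k = b then 1 else 0))"
  by (simp add: dvec_nth)

context
  fixes x :: "real^'n" and p :: real
  assumes x: "x \<in> dom_R f" and p: "p < 0" and GB: "\<And>w. Lb x p w \<le> f w"
begin

definition tight where "tight w \<longleftrightarrow> f w = Lb x p w"

lemma tight_dom: "tight w \<Longrightarrow> w \<in> dom_R f"
  unfolding tight_def Lb_def dom_R_def by simp

lemma tight_val: "tight w \<Longrightarrow> real_of_ereal (f w) = real_of_ereal (f x) + p/2 * n1 (w - x)"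
  unfolding tight_def Lb_def by simp

lemma shift_eq: "(w + t *\<^sub>R d) - x = (w - x) + t *\<^sub>R d"
  by (simp add: algebra_simps)

lemma TD1:
  assumes w: "tight w"
  shows "ddir f w (dvec a b) \<ge> ereal p"
proof (cases "ddir f w (dvec a b) = \<infinity>")
  case True thus ?thesis by simp
next
  case False
  from LLq[OF tight_dom[OF w] False] obtain q \<delta> where q: "ddir f w (dvec a b) = ereal q" "\<delta> > 0"
    "\<forall>\<alpha>. 0 \<le> \<alpha> \<longrightarrow> \<alpha> \<le> \<delta> \<longrightarrow> f (w + \<alpha> *\<^sub>R dvec a b) = f w + ereal (\<alpha> * q)" by blast
  have v1: "f (w + \<delta> *\<^sub>R dvec a b) = ereal (real_of_ereal (f w) + \<delta> * q)"
    using q(2,3) dom_real[OF tight_dom[OF w]] by (metis order_refl less_imp_le plus_ereal.simps(1))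
  have n: "n1 ((w - x) + \<delta> *\<^sub>R dvec a b) \<le> n1 (w - x) + 2 * \<delta>"
    using n1_dvec_le[of \<delta> "w - x" a b] q(2) by simp
  have "p/2 * (n1 (w - x) + 2 * \<delta>) \<le> p/2 * n1 ((w - x) + \<delta> *\<^sub>R dvec a b)"
    using mult_left_mono_neg[OF n, of "p/2"] p by simp
  moreover have "Lb x p (w + \<delta> *\<^sub>R dvec a b) \<le> f (w + \<delta> *\<^sub>R dvec a b)" by (rule GB)
  ultimately have "real_of_ereal (f x) + p/2 * (n1 (w - x) + 2 * \<delta>) \<le> real_of_ereal (f w) + \<delta> * q"
    unfolding Lb_def v1 shift_eq by simp
  hence "\<delta> * p \<le> \<delta> * q" using tight_val[OF w] by (simp add: algebra_simps)
  hence "p \<le> q" using q(2) by (simp add: mult_le_cancel_left)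
  thus ?thesis using q(1) by simp
qed

lemma TD2:
  assumes w: "tight w" and ab: "a \<noteq> b" and D: "ddir f w (dvec a b) \<le> ereal p"
  shows "(w - x)$a \<ge> 0 \<and> (w - x)$b \<le> 0"
proof -
  have ni: "ddir f w (dvec a b) \<noteq> \<infinity>" using D by auto
  from LLq[OF tight_dom[OF w] ni] obtain q \<delta> where q: "ddir f w (dvec a b) = ereal q" "\<delta> > 0"
    "\<forall>\<alpha>. 0 \<le> \<alpha> \<longrightarrow> \<alpha> \<le> \<delta> \<longrightarrow> f (w + \<alpha> *\<^sub>R dvec a b) = f w + ereal (\<alpha> * q)" by blast
  have qp: "q \<le> p" using D q(1) by simp
  define v where "v = w - x"
  have key: False if \<alpha>: "0 < \<alpha>" "\<alpha> \<le> \<delta>" and nl: "n1 (v + \<alpha> *\<^sub>R dvec a b) \<le> n1 v" for \<alpha>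
  proof -
    have v1: "f (w + \<alpha> *\<^sub>R dvec a b) = ereal (real_of_ereal (f w) + \<alpha> * q)"
      using q(3) \<alpha> dom_real[OF tight_dom[OF w]] by (metis less_imp_le plus_ereal.simps(1))
    have "p/2 * n1 v \<le> p/2 * n1 (v + \<alpha> *\<^sub>R dvec a b)"
      using mult_left_mono_neg[OF nl, of "p/2"] p by simp
    moreover have "Lb x p (w + \<alpha> *\<^sub>R dvec a b) \<le> f (w + \<alpha> *\<^sub>R dvec a b)" by (rule GB)
    ultimately have "real_of_ereal (f x) + p/2 * n1 v \<le> real_of_ereal (f w) + \<alpha> * q"
      unfolding Lb_def v1 shift_eq v_def by simp
    hence "0 \<le> \<alpha> * q" using tight_val[OF w] unfolding v_def by simp
    moreover have "\<alpha> * q < 0" using \<alpha>(1) qp p by (simp add: mult_pos_neg)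
    ultimately show False by simp
  qed
  have A: "v$a \<ge> 0"
  proof (rule ccontr)
    assume "\<not> v$a \<ge> 0"
    define \<alpha> where "\<alpha> = min \<delta> (- v$a)"
    have \<alpha>: "0 < \<alpha>" "\<alpha> \<le> \<delta>" "\<alpha> \<le> - v$a" using q(2) \<open>\<not> v$a \<ge> 0\<close> unfolding \<alpha>_def by auto
    have "\<bar>v$b - \<alpha>\<bar> \<le> \<bar>v$b\<bar> + \<alpha>" using \<alpha>(1) by linarith
    hence "n1 (v + \<alpha> *\<^sub>R dvec a b) \<le> n1 v" using n1_dvec[OF ab, of v \<alpha>] \<alpha> by linarith
    thus False using key \<alpha> by blast
  qed
  have Bb: "v$b \<le> 0"
  proof (rule ccontr)
    assume "\<not> v$b \<le> 0"
    define \<alpha> where "\<alpha> = min \<delta> (v$b)"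
    have \<alpha>: "0 < \<alpha>" "\<alpha> \<le> \<delta>" "\<alpha> \<le> v$b" using q(2) \<open>\<not> v$b \<le> 0\<close> unfolding \<alpha>_def by auto
    have "\<bar>v$a + \<alpha>\<bar> \<le> \<bar>v$a\<bar> + \<alpha>" using \<alpha>(1) by linarith
    hence "n1 (v + \<alpha> *\<^sub>R dvec a b) \<le> n1 v" using n1_dvec[OF ab, of v \<alpha>] \<alpha> by linarith
    thus False using key \<alpha> by blast
  qed
  show ?thesis using A Bb unfolding v_def by simp
qed


lemma TD3:
  assumes w: "tight w" and ab: "a \<noteq> b" and D: "ddir f w (dvec a b) = ereal p"
  shows "0 < cbar f w a b \<and> tight (w + cbar f w a b *\<^sub>R dvec a b) \<and>
         ddir f (w + cbar f w a b *\<^sub>R dvec a b) (dvec a b) > ereal p"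
proof -
  define d where "d = dvec a b"
  define v where "v = w - x"
  define fw where "fw = real_of_ereal (f w)"
  have wd: "w \<in> dom_R f" using tight_dom[OF w] .
  have fwe: "f w = ereal fw" using dom_real[OF wd] fw_def by simp
  have sg: "v$a \<ge> 0" "v$b \<le> 0" using TD2[OF w ab] D unfolding v_def by auto
  have tv: "fw = real_of_ereal (f x) + p/2 * n1 v" using tight_val[OF w] unfolding fw_def v_def .
  have lower: "ereal (fw + l * p) \<le> f (w + l *\<^sub>R d)" if "0 \<le> l" for l
  proof -
    have "Lb x p (w + l *\<^sub>R d) = ereal (fw + l * p)"
      unfolding Lb_def shift_eq d_def using n1_exact[OF ab sg that] tv unfolding v_def
      by (simp add: algebra_simps)
    thus ?thesis using GB by metis
  qed
  define \<Lambda> where "\<Lambda> = {l. 0 \<le> l \<and> f (w + l *\<^sub>R d) \<le> ereal (fw + l * p)}"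
  have Pequiv: "(l \<ge> 0 \<and> f (w + l *\<^sub>R d) - f w = ereal l * ddir f w d) \<longleftrightarrow> l \<in> \<Lambda>" for l
  proof
    assume "l \<ge> 0 \<and> f (w + l *\<^sub>R d) - f w = ereal l * ddir f w d"
    hence h: "l \<ge> 0" "f (w + l *\<^sub>R d) - ereal fw = ereal (l * p)" using D fwe unfolding d_def by auto
    hence "f (w + l *\<^sub>R d) = ereal (fw + l * p)"
      using notminf by (cases "f (w + l *\<^sub>R d)") (auto simp: algebra_simps)
    thus "l \<in> \<Lambda>" using h(1) unfolding \<Lambda>_def by simp
  next
    assume "l \<in> \<Lambda>"
    hence h: "l \<ge> 0" "f (w + l *\<^sub>R d) \<le> ereal (fw + l * p)" unfolding \<Lambda>_def by auto
    hence "f (w + l *\<^sub>R d) = ereal (fw + l * p)" using lower[OF h(1)] by simp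
    thus "l \<ge> 0 \<and> f (w + l *\<^sub>R d) - f w = ereal l * ddir f w d" using h(1) D fwe unfolding d_def by simp
  qed
  obtain M where M: "\<forall>y\<in>dom_R f. norm y \<le> M" using bd unfolding bounded_iff by blast
  have sub: "\<Lambda> \<subseteq> {0..2*M}"
  proof
    fix l assume l: "l \<in> \<Lambda>"
    hence l0: "l \<ge> 0" and fin: "f (w + l *\<^sub>R d) \<le> ereal (fw + l * p)" unfolding \<Lambda>_def by auto
    have "w + l *\<^sub>R d \<in> dom_R f" using fin unfolding dom_R_def by (auto intro: le_less_trans)
    hence n1: "norm (w + l *\<^sub>R d) \<le> M" using M by blast
    have n2: "norm w \<le> M" using M wd by blast
    have "\<bar>(l *\<^sub>R d)$a\<bar> \<le> norm (l *\<^sub>R d)" by (rule component_le_norm_cart)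
    moreover have "(l *\<^sub>R d)$a = l" using ab unfolding d_def by (simp add: dvec_nth)
    moreover have "norm (l *\<^sub>R d) \<le> norm (w + l *\<^sub>R d) + norm w"
      using norm_triangle_ineq4[of "w + l *\<^sub>R d" w] by simp
    ultimately have "l \<le> 2 * M" using n1 n2 l0 by linarith
    thus "l \<in> {0..2*M}" using l0 by simp
  qed
  have clo: "closed \<Lambda>"
  proof -
    have "\<Lambda> = {0..} \<inter> {l. f (w + l *\<^sub>R d) \<le> ereal (fw + l * p)}" unfolding \<Lambda>_def by auto
    moreover have "closed {l::real. f (w + l *\<^sub>R d) \<le> ereal (fw + l * p)}"
      by (rule closed_sub) (intro continuous_intros)+
    ultimately show ?thesis by (simp add: closed_Int)
  qed
  have "\<Lambda> = {0..2*M} \<inter> \<Lambda>" using sub by blast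
  hence comp: "compact \<Lambda>" using compact_Int_closed[OF compact_Icc[of 0 "2*M"] clo] by metis
  have "0 \<in> \<Lambda>" unfolding \<Lambda>_def using fwe by simp
  then obtain c where c: "c \<in> \<Lambda>" "\<forall>t\<in>\<Lambda>. t \<le> c"
    using compact_attains_sup[OF comp] by blast
  have cb: "cbar f w a b = c"
    unfolding cbar_def dderiv_ddir
  proof (rule Greatest_equality)
    show "c \<ge> 0 \<and> f (w + c *\<^sub>R dvec a b) - f w = ereal c * ddir f w (dvec a b)"
      using Pequiv[of c] c(1) unfolding d_def by blast
    fix y assume "y \<ge> 0 \<and> f (w + y *\<^sub>R dvec a b) - f w = ereal y * ddir f w (dvec a b)"
    hence "y \<in> \<Lambda>" using Pequiv[of y] unfolding d_def by blast
    thus "y \<le> c" using c(2) by blast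
  qed
  have ni: "ddir f w d \<noteq> \<infinity>" using D unfolding d_def by simp
  from LLq[OF wd ni] obtain q \<delta> where q: "ddir f w d = ereal q" "\<delta> > 0"
    "\<forall>\<alpha>. 0 \<le> \<alpha> \<longrightarrow> \<alpha> \<le> \<delta> \<longrightarrow> f (w + \<alpha> *\<^sub>R d) = f w + ereal (\<alpha> * q)" by blast
  have "q = p" using q(1) D unfolding d_def by simp
  hence "\<delta> \<in> \<Lambda>" using q(2,3) fwe unfolding \<Lambda>_def by simp
  hence cpos: "c > 0" using c(2) q(2) by force
  have c0: "c \<ge> 0" and fc: "f (w + c *\<^sub>R d) = ereal (fw + c * p)"
    using c(1) lower[of c] unfolding \<Lambda>_def by auto
  have tc: "tight (w + c *\<^sub>R d)"
  proof -
    have "n1 ((w + c *\<^sub>R d) - x) = n1 v + 2 * c"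
      unfolding shift_eq d_def v_def using n1_exact[OF ab sg c0] unfolding v_def .
    thus ?thesis unfolding tight_def Lb_def fc using tv by (simp add: algebra_simps)
  qed
  have gt: "ddir f (w + c *\<^sub>R d) d > ereal p"
  proof (rule ccontr)
    assume "\<not> ddir f (w + c *\<^sub>R d) d > ereal p"
    hence le: "ddir f (w + c *\<^sub>R d) d \<le> ereal p" by simp
    hence ni2: "ddir f (w + c *\<^sub>R d) d \<noteq> \<infinity>" by auto
    have wcd: "w + c *\<^sub>R d \<in> dom_R f" using fc unfolding dom_R_def by simp
    from LLq[OF wcd ni2] obtain q2 \<delta>2 where q2: "ddir f (w + c *\<^sub>R d) d = ereal q2" "\<delta>2 > 0"
      "\<forall>\<alpha>. 0 \<le> \<alpha> \<longrightarrow> \<alpha> \<le> \<delta>2 \<longrightarrow> f (w + c *\<^sub>R d + \<alpha> *\<^sub>R d) = f (w + c *\<^sub>R d) + ereal (\<alpha> * q2)"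
      by blast
    have q2p: "q2 \<le> p" using le q2(1) by simp
    have eqv: "w + c *\<^sub>R d + \<delta>2 *\<^sub>R d = w + (c + \<delta>2) *\<^sub>R d" by (simp add: algebra_simps)
    have "f (w + (c + \<delta>2) *\<^sub>R d) = ereal (fw + c * p + \<delta>2 * q2)"
      using q2(2,3) fc eqv by (metis order_refl less_imp_le plus_ereal.simps(1))
    moreover have "\<delta>2 * q2 \<le> \<delta>2 * p" using q2p q2(2) by (simp add: mult_left_mono)
    ultimately have "f (w + (c + \<delta>2) *\<^sub>R d) \<le> ereal (fw + (c + \<delta>2) * p)"
      by (simp add: algebra_simps)
    hence "c + \<delta>2 \<in> \<Lambda>" using c0 q2(2) unfolding \<Lambda>_def by simp
    with c(2) q2(2) show False by force
  qed
  show ?thesis using cpos tc gt cb unfolding d_def by simp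
qed


lemma dvec_swap: "dvec b a = - dvec a b"
  by (simp add: dvec_def)

lemma SL:
  assumes u: "tight u" and ij: "i0 \<noteq> j0" and D0: "ddir f u (dvec i0 j0) = ereal p"
    and ab: "a \<noteq> b" and Dgt: "ddir f u (dvec a b) > ereal p"
    and Dle: "ddir f (u + cbar f u i0 j0 *\<^sub>R dvec i0 j0) (dvec a b) \<le> ereal p"
  shows "a \<noteq> i0 \<and> a \<noteq> j0 \<and> ddir f u (dvec a j0) \<le> ereal p"
proof -
  define c where "c = cbar f u i0 j0"
  define d0 where "d0 = dvec i0 j0"
  define e where "e = dvec a b"
  define u' where "u' = u + c *\<^sub>R d0"
  from TD3[OF u ij D0] have c: "c > 0" and tu': "tight u'"
    unfolding c_def u'_def d0_def by auto
  have ud: "u \<in> dom_R f" using tight_dom[OF u] .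
  have u'd: "u' \<in> dom_R f" using tight_dom[OF tu'] .
  define v where "v = u - x"
  define v' where "v' = u' - x"
  have v'c: "v'$k = v$k + c * ((if k = i0 then 1 else 0) - (if k = j0 then 1 else 0))" for k
    unfolding v'_def v_def u'_def d0_def by (simp add: dvec_nth)
  have sg0: "v$i0 \<ge> 0" "v$j0 \<le> 0" using TD2[OF u ij] D0 unfolding v_def by auto
  have Dle': "ddir f u' e \<le> ereal p" using Dle unfolding u'_def c_def d0_def e_def .
  have sg1: "v'$a \<ge> 0" "v'$b \<le> 0" using TD2[OF tu' ab] Dle' unfolding v'_def e_def by auto
  have aj0: "a \<noteq> j0"
  proof
    assume "a = j0"
    hence "v'$a = v$j0 - c" using v'c[of a] ij by simp
    with sg0 sg1 c show False by simp
  qed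
  have bi0: "b \<noteq> i0"
  proof
    assume "b = i0"
    hence "v'$b = v$i0 + c" using v'c[of b] ij by simp
    with sg0 sg1 c show False by simp
  qed
  have "ddir f u' e \<ge> ereal p" using TD1[OF tu'] unfolding e_def .
  hence Deq: "ddir f u' e = ereal p" using Dle' by simp
  have "ddir f u' e \<noteq> \<infinity>" using Deq by simp
  from LLq[OF u'd this] obtain q \<delta> where q: "ddir f u' e = ereal q" "\<delta> > 0"
    "\<forall>\<alpha>. 0 \<le> \<alpha> \<longrightarrow> \<alpha> \<le> \<delta> \<longrightarrow> f (u' + \<alpha> *\<^sub>R e) = f u' + ereal (\<alpha> * q)" by blast
  have qp: "q = p" using q(1) Deq by simp
  define W where "W = u' + \<delta> *\<^sub>R e"
  define fu' where "fu' = real_of_ereal (f u')"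
  define fu where "fu = real_of_ereal (f u)"
  define fx where "fx = real_of_ereal (f x)"
  have fue: "f u = ereal fu" using dom_real[OF ud] fu_def by simp
  have fu'e: "f u' = ereal fu'" using dom_real[OF u'd] fu'_def by simp
  define vW where "vW = W - x"
  have vWc: "vW$k = v'$k + \<delta> * ((if k = a then 1 else 0) - (if k = b then 1 else 0))" for k
    unfolding vW_def v'_def W_def e_def by (simp add: dvec_nth)
  have Wu: "W$k - u$k = c * ((if k = i0 then 1 else 0) - (if k = j0 then 1 else 0))
      + \<delta> * ((if k = a then 1 else 0) - (if k = b then 1 else 0))" for k
    unfolding W_def u'_def d0_def e_def by (simp add: dvec_nth)
  have n1W: "n1 vW = n1 v' + 2 * \<delta>"
  proof -
    have "vW = v' + \<delta> *\<^sub>R e" unfolding vW_def v'_def W_def by (simp add: algebra_simps)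
    thus ?thesis using n1_exact[OF ab sg1] q(2) unfolding e_def by simp
  qed
  have fWe: "f W = ereal (fu' + \<delta> * p)" using q(2,3) fu'e qp unfolding W_def by simp
  have tv': "fu' = fx + p/2 * n1 v'" using tight_val[OF tu'] unfolding fu'_def fx_def v'_def .
  have Wd: "W \<in> dom_R f" using fWe unfolding dom_R_def by simp
  have vWa: "vW$a \<ge> \<delta>" using vWc[of a] sg1 ab by simp
  have vWb: "vW$b \<le> - \<delta>" using vWc[of b] sg1 ab by simp
  have gen: "f (u + \<epsilon> *\<^sub>R dvec s t) \<le> f u + ereal (\<epsilon> * p)"
    if st: "s \<noteq> t" and \<epsilon>: "\<epsilon> \<ge> 0" and vs: "vW$s \<ge> \<epsilon>" and vt: "vW$t \<le> - \<epsilon>"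
      and exi: "f W + f u \<ge> f (W - \<epsilon> *\<^sub>R dvec s t) + f (u + \<epsilon> *\<^sub>R dvec s t)" for s t \<epsilon>
  proof -
    have e1: "(W - \<epsilon> *\<^sub>R dvec s t) - x = vW + (- \<epsilon>) *\<^sub>R dvec s t" unfolding vW_def by (simp add: algebra_simps)
    have n: "n1 ((W - \<epsilon> *\<^sub>R dvec s t) - x) = n1 vW - 2 * \<epsilon>" unfolding e1 by (rule n1_shift[OF st vs vt \<epsilon>])
    have lb: "f (W - \<epsilon> *\<^sub>R dvec s t) \<ge> ereal (fu' + \<delta> * p - \<epsilon> * p)"
    proof -
      have "Lb x p (W - \<epsilon> *\<^sub>R dvec s t) = ereal (fu' + \<delta> * p - \<epsilon> * p)"
        unfolding Lb_def n n1W tv' fx_def[symmetric] by (simp add: algebra_simps)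
      thus ?thesis using GB by metis
    qed
    have "f W + f u \<ge> f (u + \<epsilon> *\<^sub>R dvec s t) + f (W - \<epsilon> *\<^sub>R dvec s t)"
      using exi by (simp add: add.commute)
    hence "ereal (fu' + \<delta> * p) + ereal fu \<ge> f (u + \<epsilon> *\<^sub>R dvec s t) + f (W - \<epsilon> *\<^sub>R dvec s t)"
      using fWe fue by simp
    hence "f (u + \<epsilon> *\<^sub>R dvec s t) \<le> ereal (fu' + \<delta> * p + fu - (fu' + \<delta> * p - \<epsilon> * p))"
      by (rule ereal_exch[OF _ lb notminf])
    thus ?thesis using fue by (simp add: algebra_simps)
  qed
  have "W$a > u$a" using Wu[of a] ab aj0 c q(2)
    by (cases "a = i0") (simp_all add: add_pos_pos)
  from exch[OF Wd ud this] obtain j \<epsilon>0 where j: "W$j < u$j" "\<epsilon>0 > 0"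
    "\<forall>\<epsilon>\<in>{0..\<epsilon>0}. f W + f u \<ge> f (W - \<epsilon> *\<^sub>R dvec a j) + f (u + \<epsilon> *\<^sub>R dvec a j)" by blast
  have jset: "j = b \<or> j = j0"
  proof (rule ccontr)
    assume "\<not> (j = b \<or> j = j0)"
    hence "W$j - u$j \<ge> 0" using Wu[of j] c q(2) by (cases "j = i0"; cases "j = a") auto
    with j(1) show False by simp
  qed
  have ja: "j \<noteq> a" using j(1) \<open>W$a > u$a\<close> by auto
  have vWj: "vW$j \<le> - min \<delta> c"
    using jset
  proof
    assume "j = b" thus ?thesis using vWb by simp
  next
    assume jj: "j = j0"
    show ?thesis
    proof (cases "j = b")
      case True thus ?thesis using vWb by simp
    next
      case False
      hence "vW$j = v$j0 - c" using vWc[of j] v'c[of j] jj ij ja by simp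
      thus ?thesis using sg0 by simp
    qed
  qed
  have D1: "ddir f u (dvec a j) \<le> ereal p"
  proof (rule DLE[OF ud])
    show "min \<epsilon>0 (min \<delta> c) > 0" using j(2) q(2) c by simp
    show "\<forall>\<epsilon>. 0 < \<epsilon> \<longrightarrow> \<epsilon> \<le> min \<epsilon>0 (min \<delta> c) \<longrightarrow> f (u + \<epsilon> *\<^sub>R dvec a j) \<le> f u + ereal (\<epsilon> * p)"
    proof (intro allI impI)
      fix \<epsilon> :: real assume \<epsilon>: "0 < \<epsilon>" "\<epsilon> \<le> min \<epsilon>0 (min \<delta> c)"
      show "f (u + \<epsilon> *\<^sub>R dvec a j) \<le> f u + ereal (\<epsilon> * p)"
      proof (rule gen)
        show "a \<noteq> j" using ja by simp
        show "vW$a \<ge> \<epsilon>" using vWa \<epsilon> by simp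
        show "vW$j \<le> - \<epsilon>" using vWj \<epsilon> by (auto simp: min_def split: if_splits)
        show "f W + f u \<ge> f (W - \<epsilon> *\<^sub>R dvec a j) + f (u + \<epsilon> *\<^sub>R dvec a j)" using j(3) \<epsilon> by simp
      qed (use \<epsilon> in simp)
    qed
  qed
  have jj0: "j = j0" using jset D1 Dgt by auto
  have "u$b > W$b" using Wu[of b] ab bi0 c q(2)
    by (cases "b = j0") (simp_all add: add_pos_pos)
  from exch[OF ud Wd this] obtain j' \<epsilon>0' where j': "u$j' < W$j'" "\<epsilon>0' > 0"
    "\<forall>\<epsilon>\<in>{0..\<epsilon>0'}. f u + f W \<ge> f (u - \<epsilon> *\<^sub>R dvec b j') + f (W + \<epsilon> *\<^sub>R dvec b j')" by blast
  have j'set: "j' = a \<or> j' = i0"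
  proof (rule ccontr)
    assume "\<not> (j' = a \<or> j' = i0)"
    hence "W$j' - u$j' \<le> 0" using Wu[of j'] c q(2) by (cases "j' = j0"; cases "j' = b") auto
    with j'(1) show False by simp
  qed
  have j'b: "j' \<noteq> b" using j'(1) \<open>u$b > W$b\<close> by auto
  have vWj': "vW$j' \<ge> min \<delta> c"
    using j'set
  proof
    assume "j' = a" thus ?thesis using vWa by simp
  next
    assume jj: "j' = i0"
    show ?thesis
    proof (cases "j' = a")
      case True thus ?thesis using vWa by simp
    next
      case False
      hence "vW$j' = v$i0 + c" using vWc[of j'] v'c[of j'] jj ij j'b by simp
      thus ?thesis using sg0 by simp
    qed
  qed
  have D2: "ddir f u (dvec j' b) \<le> ereal p"
  proof (rule DLE[OF ud])
    show "min \<epsilon>0' (min \<delta> c) > 0" using j'(2) q(2) c by simp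
    show "\<forall>\<epsilon>. 0 < \<epsilon> \<longrightarrow> \<epsilon> \<le> min \<epsilon>0' (min \<delta> c) \<longrightarrow> f (u + \<epsilon> *\<^sub>R dvec j' b) \<le> f u + ereal (\<epsilon> * p)"
    proof (intro allI impI)
      fix \<epsilon> :: real assume \<epsilon>: "0 < \<epsilon>" "\<epsilon> \<le> min \<epsilon>0' (min \<delta> c)"
      show "f (u + \<epsilon> *\<^sub>R dvec j' b) \<le> f u + ereal (\<epsilon> * p)"
      proof (rule gen)
        show "j' \<noteq> b" using j'b by simp
        show "vW$j' \<ge> \<epsilon>" using vWj' \<epsilon> by (auto simp: min_def split: if_splits)
        show "vW$b \<le> - \<epsilon>" using vWb \<epsilon> by simp
        have "f u + f W \<ge> f (u - \<epsilon> *\<^sub>R dvec b j') + f (W + \<epsilon> *\<^sub>R dvec b j')" using j'(3) \<epsilon> by simp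
        thus "f W + f u \<ge> f (W - \<epsilon> *\<^sub>R dvec j' b) + f (u + \<epsilon> *\<^sub>R dvec j' b)"
          by (simp add: dvec_swap[of b j'] add.commute)
      qed (use \<epsilon> in simp)
    qed
  qed
  have "j' \<noteq> a" using D2 Dgt by auto
  hence "a \<noteq> i0" using j'set by auto
  thus ?thesis using aj0 D1 jj0 by simp
qed


definition OI :: "real^'n \<Rightarrow> 'n set \<Rightarrow> bool" where
  "OI y As \<longleftrightarrow> tight y \<and> (\<forall>a\<in>As. \<forall>b. b \<noteq> a \<longrightarrow> ddir f y (dvec a b) > ereal p)"

definition II :: "real^'n \<Rightarrow> 'n set \<Rightarrow> 'n \<Rightarrow> 'n set \<Rightarrow> bool" where
  "II y As i Bs \<longleftrightarrow> OI y As \<and> (\<forall>b\<in>Bs. b \<noteq> i \<longrightarrow> ddir f y (dvec i b) > ereal p)"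

lemma STEP:
  assumes I: "II y As i Bs" and ji: "j \<noteq> i"
  shows "II (incslope_step f (ereal p) i j y) As i (insert j Bs)"
proof -
  have ty: "tight y" and oa: "\<forall>a\<in>As. \<forall>b. b \<noteq> a \<longrightarrow> ddir f y (dvec a b) > ereal p"
    and ob: "\<forall>b\<in>Bs. b \<noteq> i \<longrightarrow> ddir f y (dvec i b) > ereal p"
    using I unfolding II_def OI_def by auto
  have ij: "i \<noteq> j" using ji by simp
  show ?thesis
  proof (cases "ddir f y (dvec i j) = ereal p")
    case True
    define y' where "y' = y + cbar f y i j *\<^sub>R dvec i j"
    have st: "incslope_step f (ereal p) i j y = y'"
      unfolding incslope_step_def dderiv_ddir y'_def using True by simp
    from TD3[OF ty ij True] have ty': "tight y'" and gt: "ddir f y' (dvec i j) > ereal p"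
      unfolding y'_def by auto
    have A: "\<forall>a\<in>As. \<forall>b. b \<noteq> a \<longrightarrow> ddir f y' (dvec a b) > ereal p"
    proof (intro ballI allI impI)
      fix a b assume a: "a \<in> As" and ba: "b \<noteq> a"
      show "ddir f y' (dvec a b) > ereal p"
      proof (rule ccontr)
        assume "\<not> ddir f y' (dvec a b) > ereal p"
        hence "ddir f (y + cbar f y i j *\<^sub>R dvec i j) (dvec a b) \<le> ereal p" unfolding y'_def by simp
        from SL[OF ty ij True _ _ this] ba oa a
        have "a \<noteq> j \<and> ddir f y (dvec a j) \<le> ereal p" by auto
        with oa a show False by force
      qed
    qed
    have Bp: "\<forall>b\<in>insert j Bs. b \<noteq> i \<longrightarrow> ddir f y' (dvec i b) > ereal p"
    proof (intro ballI impI)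
      fix b assume b: "b \<in> insert j Bs" and bi: "b \<noteq> i"
      show "ddir f y' (dvec i b) > ereal p"
      proof (cases "b = j")
        case True thus ?thesis using gt by simp
      next
        case False
        hence bB: "b \<in> Bs" using b by simp
        show ?thesis
        proof (rule ccontr)
          assume "\<not> ddir f y' (dvec i b) > ereal p"
          hence "ddir f (y + cbar f y i j *\<^sub>R dvec i j) (dvec i b) \<le> ereal p" unfolding y'_def by simp
          from SL[OF ty ij True _ _ this] bi ob bB show False by auto
        qed
      qed
    qed
    show ?thesis unfolding st II_def OI_def using ty' A Bp by blast
  next
    case False
    have st: "incslope_step f (ereal p) i j y = y"
      unfolding incslope_step_def dderiv_ddir using False by simp
    have "ddir f y (dvec i j) > ereal p" using TD1[OF ty, of i j] False by simp
    thus ?thesis unfolding st using I unfolding II_def by auto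
  qed
qed

lemma INNER:
  assumes "II y As i Bs" "\<forall>j\<in>set l. j \<noteq> i"
  shows "II (fold (\<lambda>j. incslope_step f (ereal p) i j) l y) As i (Bs \<union> set l)"
  using assms
proof (induction l arbitrary: y Bs)
  case Nil thus ?case by simp
next
  case (Cons j l)
  have "II (incslope_step f (ereal p) i j y) As i (insert j Bs)"
    using STEP Cons.prems by simp
  from Cons.IH[OF this] Cons.prems(2) show ?case by (simp add: Un_insert_left Un_insert_right)
qed

lemma OUTER:
  assumes "OI y As" "\<forall>i\<in>set iss. set (js i) = UNIV - {i}"
  shows "OI (fold (\<lambda>i y. fold (\<lambda>j. incslope_step f (ereal p) i j) (js i) y) iss y) (As \<union> set iss)"
  using assms
proof (induction iss arbitrary: y As)
  case Nil thus ?case by simp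
next
  case (Cons i iss)
  have "II y As i {}" using Cons.prems(1) unfolding II_def by simp
  moreover have js: "set (js i) = UNIV - {i}" using Cons.prems(2) by simp
  ultimately have "II (fold (\<lambda>j. incslope_step f (ereal p) i j) (js i) y) As i ({} \<union> set (js i))"
    by (intro INNER) auto
  hence "II (fold (\<lambda>j. incslope_step f (ereal p) i j) (js i) y) As i (UNIV - {i})" using js by simp
  hence "OI (fold (\<lambda>j. incslope_step f (ereal p) i j) (js i) y) (insert i As)"
    unfolding II_def OI_def by auto
  from Cons.IH[OF this] Cons.prems(2) show ?case by (simp add: Un_insert_left Un_insert_right)
qed

end

lemma ddir_zero:
  assumes "y \<in> dom_R f"
  shows "ddir f y 0 = 0"
  unfolding ddir_def
proof (rule Lim_ev)
  show "eventually (\<lambda>\<alpha>. (f (y + \<alpha> *\<^sub>R 0) - f y) / ereal \<alpha> = 0) (at_right (0::real))"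
    using dom_real[OF assms] by (intro always_eventually allI) (metis add.right_neutral ereal_minus(1) scaleR_zero_right diff_self zero_ereal_def ereal_divide_zero_left)
qed

lemma finite_phiset: "finite {dderiv f z i j | i j. True}"
proof -
  have "{dderiv f z i j | i j. True} = (\<lambda>(i,j). dderiv f z i j) ` UNIV" by auto
  thus ?thesis by simp
qed

lemma phi_le: "phi f z \<le> dderiv f z i j"
  unfolding phi_def using finite_phiset by (intro Min_le) auto

lemma phi_in: "\<exists>i j. phi f z = dderiv f z i j"
proof -
  have "phi f z \<in> {dderiv f z i j | i j. True}"
    unfolding phi_def using finite_phiset by (intro Min_in) auto
  thus ?thesis by blast
qed

definition V where "V = insert \<infinity> (ereal ` (\<Union>i. \<Union>j. Q (dvec i j)))"

lemma finite_V: "finite V"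
  unfolding V_def using finite_Q by simp

lemma phi_V:
  assumes "z \<in> dom_R f"
  shows "phi f z \<in> V"
proof -
  obtain i j where ij: "phi f z = dderiv f z i j" using phi_in by blast
  from LL[OF assms, of "dvec i j"] show ?thesis unfolding ij dderiv_ddir V_def by auto
qed

lemma CALL:
  assumes x: "x \<in> dom_R f" and ph: "phi f x = ereal p" and p: "p < 0" and vo: "valid_orders iss js"
  shows "pm_incslope f iss js x \<in> dom_R f \<and> phi f (pm_incslope f iss js x) > ereal p"
proof -
  have hyp: "\<forall>i j. ddir f x (dvec i j) \<ge> ereal p"
    using phi_le[of x] ph unfolding dderiv_ddir by metis
  have GB: "\<And>w. Lb x p w \<le> f w" using G[OF x _ hyp] p by simp
  have t0: "tight x p x" unfolding tight_def[OF x p GB] Lb_def using dom_real[OF x] by simp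
  have "OI x p x {}" unfolding OI_def[OF x p GB] using t0 by simp
  moreover have vo1: "set iss = UNIV" "\<forall>i\<in>set iss. set (js i) = UNIV - {i}"
    using vo unfolding valid_orders_def by auto
  ultimately have "OI x p (fold (\<lambda>i y. fold (\<lambda>j. incslope_step f (ereal p) i j) (js i) y) iss x) ({} \<union> set iss)"
    by (intro OUTER[OF x p GB]) auto
  hence R: "OI x p (pm_incslope f iss js x) UNIV"
    unfolding pm_incslope_def using ph vo1(1) by simp
  define y where "y = pm_incslope f iss js x"
  have ty: "tight x p y" and gt: "\<forall>a b. b \<noteq> a \<longrightarrow> ddir f y (dvec a b) > ereal p"
    using R unfolding OI_def[OF x p GB] y_def by auto
  have yd: "y \<in> dom_R f" using tight_dom[OF x p GB ty] .
  obtain i j where ij: "phi f y = dderiv f y i j" using phi_in by blast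
  have "phi f y > ereal p"
  proof (cases "i = j")
    case True
    hence "dderiv f y i j = 0" unfolding dderiv_ddir using ddir_zero[OF yd] by (simp add: dvec_def)
    thus ?thesis using ij p by simp
  next
    case False thus ?thesis using gt ij unfolding dderiv_ddir by metis
  qed
  thus ?thesis using yd y_def by simp
qed

lemma NEXT:
  assumes z: "z \<in> dom_R f" and neg: "phi f z < 0" and out: "incslope_out f z y"
  shows "y \<in> dom_R f \<and> phi f y > phi f z"
proof -
  have "phi f z \<in> V" using phi_V[OF z] .
  with neg obtain p where p: "phi f z = ereal p" unfolding V_def by auto
  hence "p < 0" using neg by simp
  from out obtain iss js where "valid_orders iss js" "y = pm_incslope f iss js z"
    unfolding incslope_out_def by blast
  with CALL[OF z p \<open>p < 0\<close>] p show ?thesis by simp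
qed

lemma run_dom:
  assumes "lsd2_run f x0 xs m" "x0 \<in> dom_R f" "k \<le> m"
  shows "xs k \<in> dom_R f"
  using assms(3)
proof (induction k)
  case 0 thus ?case using assms(1,2) unfolding lsd2_run_def by simp
next
  case (Suc k)
  hence "k < m" by simp
  hence "phi f (xs k) < 0 \<and> incslope_out f (xs k) (xs (Suc k))" using assms(1) unfolding lsd2_run_def by blast
  thus ?case using NEXT Suc by auto
qed

end


theorem mainTheorem18:
  fixes f :: "real^'n::finite \<Rightarrow> ereal" and x0 :: "real^'n"
  assumes "M_convex f"
    and "bounded (dom_R f)"
    and "x0 \<in> dom_R f"
  shows "\<not> (\<exists>xs. \<forall>m. lsd2_run f x0 xs m) \<and>
         (\<forall>xs m. lsd2_run f x0 xs m \<and> \<not> phi f (xs m) < 0 \<longrightarrow>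
            xs m \<in> dom_R f \<and> (\<forall>y. f (xs m) \<le> f y))"
proof -
  have "polyhedral_convex f" using assms(1) unfolding M_convex_def by simp
  from rep_exists[OF this] obtain F :: "(((real^'n) \<times> real) set) set" and A B C
    where R: "finite F" "\<forall>x t. f x \<le> ereal t \<longleftrightarrow> (\<forall>h\<in>F. A h \<bullet> x + B h * t \<le> C h)"
    by blast
  interpret mcr f F A B C
    using assms(1,2) R by unfold_locales auto
  have P1: "\<not> (\<exists>xs. \<forall>m. lsd2_run f x0 xs m)"
  proof
    assume "\<exists>xs. \<forall>m. lsd2_run f x0 xs m"
    then obtain xs where xs: "\<forall>m. lsd2_run f x0 xs m" by blast
    have dom: "xs k \<in> dom_R f" for k using run_dom[OF xs[rule_format, of k] assms(3)] by simp
    have inc: "phi f (xs k) < phi f (xs (Suc k))" for k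
    proof -
      have "phi f (xs k) < 0 \<and> incslope_out f (xs k) (xs (Suc k))"
        using xs[rule_format, of "Suc k"] unfolding lsd2_run_def by blast
      thus ?thesis using NEXT[OF dom[of k]] by blast
    qed
    have sm: "strict_mono (\<lambda>k. phi f (xs k))" using inc by (rule strict_monoI_Suc)
    have "range (\<lambda>k. phi f (xs k)) \<subseteq> V" using phi_V[OF dom] by blast
    hence "finite (range (\<lambda>k. phi f (xs k)))" using finite_V finite_subset by blast
    hence "finite (UNIV :: nat set)" using finite_imageD strict_mono_imp_inj_on[OF sm] by blast
    thus False by simp
  qed
  have P2: "\<forall>xs m. lsd2_run f x0 xs m \<and> \<not> phi f (xs m) < 0 \<longrightarrow>
            xs m \<in> dom_R f \<and> (\<forall>y. f (xs m) \<le> f y)"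
  proof (intro allI impI)
    fix xs m assume H: "lsd2_run f x0 xs m \<and> \<not> phi f (xs m) < 0"
    have d: "xs m \<in> dom_R f" using run_dom[of x0 xs m m] H assms(3) by simp
    have hyp: "\<forall>i j. ddir f (xs m) (dvec i j) \<ge> ereal 0"
      using phi_le[of "xs m"] H unfolding dderiv_ddir by (metis not_less order_trans zero_ereal_def)
    have "\<forall>y. f (xs m) \<le> f y"
    proof
      fix y
      have "Lb (xs m) 0 y \<le> f y" using G[OF d _ hyp] by simp
      thus "f (xs m) \<le> f y" unfolding Lb_def using dom_real[OF d] by simp
    qed
    thus "xs m \<in> dom_R f \<and> (\<forall>y. f (xs m) \<le> f y)" using d by simp
  qed
  show ?thesis using P1 P2 by blast
qed

end
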